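(* Let $H$ be a graph and let $A, B \subseteq V(H)$ be disjoint such that $(H,A,B)$ has property $\mathcal{P}$. Let $H^*\coloneqq H - E_H(A,B)$, $A' \coloneqq \{x \in A \colon d_{H}(x) \geq 4\}$ and $B' \coloneqq N_H(A \setminus A')$. Then $S(H) = (S(H^* ) \setminus B') \cup A'$, $P(H) = P(H^* ) \cup B'$, and $R(H) = R(H^* ) \setminus A'$.
   Context: For a graph $G$ and $X\subseteq V(G)$, $N_G(X)=\{x\in V(G)\setminus X: xy\in E(G)\text{ for some }y\in X\}$, $N_G(x)=N_G(\{x\})$, $d_G(x)$ is the degree, $\mathrm{dist}_G$ is graph distance; $E_G(X)$ is the set of edges inside $X$, $E_G(X,Y)$ the set of edges with one endpoint in $X$ and the other in $Y$, and $G-E'$ deletes the edge set $E'$. The strong $4$-core $S(G)$ is the maximal $X\subseteq V(G)$ with $|N_G(x)\cap X|\geq 4$ for all $x\in X\cup N_G(X)$; $P(G)=N_G(S(G))$ and $R(G)=V(G)\setminus(S(G)\cup P(G))$. A set $B$ has the robust sapphire property for $G$ if (RS1) every $x\in B\cup N_G(B)$ satisfies $\{x\}\cup N_G(x)\subseteq S(G)$ and $d_G(x)\ge5$, and (RS2) distinct $b_1,b_2\in B$ satisfy $\mathrm{dist}_G(b_1,b_2)\ge5$. For a graph $H$ and disjoint $A,B\subseteq V(H)$, with $H^*=H-E_H(A,B)$, $(H,A,B)$ has property $\mathcal{P}$ if: (P1) $E_H(A)=E_H(B)=\varnothing$; (P2) $H[A\cup B]$ is a union of stars and $|N_H(b)\cap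 A|\le 1$ for each $b\in B$; (P3) every vertex of $A$ is isolated in $H^*$; (P4) $B$ has the robust sapphire property for $H^*$. *)

theory Defs
  imports Main "HOL-Library.Extended_Nat"
begin

definition graph :: "'a set \<Rightarrow> 'a set set \<Rightarrow> bool" where
  "graph V E \<longleftrightarrow> finite V \<and> (\<forall>e\<in>E. e \<subseteq> V \<and> card e = 2)"

definition nbr :: "'a set \<Rightarrow> 'a set set \<Rightarrow> 'a \<Rightarrow> 'a set" where
  "nbr V E x = {y\<in>V. y \<noteq> x \<and> {x, y} \<in> E}"

definition nbrs :: "'a set \<Rightarrow> 'a set set \<Rightarrow> 'a set \<Rightarrow> 'a set" where
  "nbrs V E X = {x\<in>V - X. \<exists>y\<in>X. {x, y} \<in> E}"

definition deg :: "'a set \<Rightarrow> 'a set set \<Rightarrow> 'a \<Rightarrow> nat" where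
  "deg V E x = card (nbr V E x)"

fun walk :: "'a set set \<Rightarrow> nat \<Rightarrow> 'a \<Rightarrow> 'a \<Rightarrow> bool" where
  "walk E 0 x y \<longleftrightarrow> x = y"
| "walk E (Suc n) x y \<longleftrightarrow> (\<exists>z. {x, z} \<in> E \<and> walk E n z y)"

definition dist :: "'a set set \<Rightarrow> 'a \<Rightarrow> 'a \<Rightarrow> enat" where
  "dist E x y = (if \<exists>n. walk E n x y then enat (LEAST n. walk E n x y) else \<infinity>)"

definition edges_in :: "'a set set \<Rightarrow> 'a set \<Rightarrow> 'a set set" where
  "edges_in E X = {e\<in>E. e \<subseteq> X}"

definition edges_between :: "'a set set \<Rightarrow> 'a set \<Rightarrow> 'a set \<Rightarrow> 'a set set" where
  "edges_between E X Y = {e\<in>E. \<exists>x\<in>X. \<exists>y\<in>Y. e = {x, y}}"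

text \<open>Strong 4-core: the maximal (= largest, since the property is closed under
  unions) X \<subseteq> V with at least 4 neighbours in X for all x in X \<union> N(X).\<close>
definition core_prop :: "'a set \<Rightarrow> 'a set set \<Rightarrow> 'a set \<Rightarrow> bool" where
  "core_prop V E X \<longleftrightarrow> X \<subseteq> V \<and>
     (\<forall>x\<in>X \<union> nbrs V E X. card (nbr V E x \<inter> X) \<ge> 4)"

definition S4 :: "'a set \<Rightarrow> 'a set set \<Rightarrow> 'a set" where
  "S4 V E = \<Union>{X. core_prop V E X}"

definition P4 :: "'a set \<Rightarrow> 'a set set \<Rightarrow> 'a set" where
  "P4 V E = nbrs V E (S4 V E)"

definition R4 :: "'a set \<Rightarrow> 'a set set \<Rightarrow> 'a set" where
  "R4 V E = V - (S4 V E \<union> P4 V E)"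

definition robust_sapphire :: "'a set \<Rightarrow> 'a set set \<Rightarrow> 'a set \<Rightarrow> bool" where
  "robust_sapphire V E B \<longleftrightarrow>
     (\<forall>x\<in>B \<union> nbrs V E B. insert x (nbr V E x) \<subseteq> S4 V E \<and> deg V E x \<ge> 5) \<and>
     (\<forall>b1\<in>B. \<forall>b2\<in>B. b1 \<noteq> b2 \<longrightarrow> dist E b1 b2 \<ge> 5)"

definition is_star :: "'a set \<Rightarrow> 'a set set \<Rightarrow> bool" where
  "is_star C F \<longleftrightarrow> (\<exists>c\<in>C. F = {{c, v} | v. v \<in> C - {c}})"

definition component :: "'a set set \<Rightarrow> 'a \<Rightarrow> 'a set" where
  "component F x = {y. (\<lambda>u v. {u, v} \<in> F)\<^sup>*\<^sup>* x y}"

definition union_of_stars :: "'a set \<Rightarrow> 'a set set \<Rightarrow> bool" where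
  "union_of_stars W F \<longleftrightarrow>
     (\<forall>x\<in>W. is_star (component F x) (edges_in F (component F x)))"

definition propP :: "'a set \<Rightarrow> 'a set set \<Rightarrow> 'a set \<Rightarrow> 'a set \<Rightarrow> bool" where
  "propP V E A B \<longleftrightarrow>
     (let Es = E - edges_between E A B in
       edges_in E A = {} \<and> edges_in E B = {} \<and>
       union_of_stars (A \<union> B) (edges_in E (A \<union> B)) \<and>
       (\<forall>b\<in>B. card (nbr V E b \<inter> A) \<le> 1) \<and>
       (\<forall>a\<in>A. nbr V Es a = {}) \<and>
       robust_sapphire V Es B)"

end

theory Submission
  imports Defs
begin

lemma S4_max: "core_prop V E X \<Longrightarrow> X \<subseteq> S4 V E"
  by (auto simp: S4_def)

lemma S4_sub: "S4 V E \<subseteq> V"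
  by (auto simp: S4_def core_prop_def)

lemma fin_nbr: "finite V \<Longrightarrow> finite (nbr V E x)"
  by (rule finite_subset[of _ V]) (auto simp: nbr_def)

lemma S4_core: assumes "finite V" shows "core_prop V E (S4 V E)"
proof -
  have "card (nbr V E x \<inter> S4 V E) \<ge> 4" if x: "x \<in> S4 V E \<union> nbrs V E (S4 V E)" for x
  proof -
    obtain X where X: "core_prop V E X" "x \<in> X \<union> nbrs V E X"
    proof (cases "x \<in> S4 V E")
      case True
      then show ?thesis using that by (auto simp: S4_def)
    next
      case False
      then obtain y where "y \<in> S4 V E" "{x,y} \<in> E" "x \<in> V" using x by (auto simp: nbrs_def)
      then obtain X where "core_prop V E X" "y \<in> X" by (auto simp: S4_def)
      moreover have "x \<notin> X" using False \<open>core_prop V E X\<close> S4_max by blast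
      ultimately show ?thesis using that[of X] \<open>{x,y} \<in> E\<close> \<open>x \<in> V\<close> by (auto simp: nbrs_def)
    qed
    then have "4 \<le> card (nbr V E x \<inter> X)" by (auto simp: core_prop_def)
    also have "\<dots> \<le> card (nbr V E x \<inter> S4 V E)"
      by (rule card_mono) (use fin_nbr[OF assms] S4_max[OF X(1)] in auto)
    finally show ?thesis .
  qed
  then show ?thesis using S4_sub[of V E] unfolding core_prop_def by blast
qed

lemma dist_le2:
  assumes "{b1, x} \<in> F" "{x, b2} \<in> F"
  shows "dist F b1 b2 \<le> 2"
proof -
  have w: "walk F 2 b1 b2" using assms by (auto simp: numeral_2_eq_2)
  then have "(LEAST n. walk F n b1 b2) \<le> 2" by (rule Least_le)
  then show ?thesis using w unfolding dist_def by (auto simp: numeral_eq_enat)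
qed

theorem proposition6p6:
  fixes V :: "'a set" and E :: "'a set set" and A B :: "'a set"
  assumes "graph V E"
    and "A \<subseteq> V" and "B \<subseteq> V" and "A \<inter> B = {}"
    and "propP V E A B"
  shows "let Es = E - edges_between E A B;
             A' = {x\<in>A. deg V E x \<ge> 4};
             B' = nbrs V E (A - A')
         in S4 V E = (S4 V Es - B') \<union> A' \<and>
            P4 V E = P4 V Es \<union> B' \<and>
            R4 V E = R4 V Es - A'"
proof -
  define Es where "Es = E - edges_between E A B"
  define A' where "A' = {x\<in>A. deg V E x \<ge> 4}"
  define B' where "B' = nbrs V E (A - A')"
  define T where "T = S4 V Es"
  define X where "X = (T - B') \<union> A'"
  have finV: "finite V" using assms(1) by (simp add: graph_def)
  have eA: "edges_in E A = {}" and eB: "edges_in E B = {}"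
    and b1: "\<forall>b\<in>B. card (nbr V E b \<inter> A) \<le> 1"
    and iso: "\<forall>a\<in>A. nbr V Es a = {}" and rs: "robust_sapphire V Es B"
    using assms(5) by (auto simp: propP_def Es_def Let_def)
  have sym: "{x,y} = {y,x}" for x y :: 'a by auto
  have EV: "x \<in> V \<and> y \<in> V \<and> x \<noteq> y" if "{x,y} \<in> E" for x y
  proof -
    have "{x,y} \<subseteq> V" "card {x,y} = 2" using assms(1) that by (auto simp: graph_def)
    then show ?thesis by (cases "x = y") auto
  qed
  have EsE: "Es \<subseteq> E" by (auto simp: Es_def)
  have eb: "{x,y} \<in> edges_between E A B \<longleftrightarrow> {x,y} \<in> E \<and> ((x \<in> A \<and> y \<in> B) \<or> (y \<in> A \<and> x \<in> B))" for x y
    by (auto simp: edges_between_def doubleton_eq_iff)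
  have nbrI: "y \<in> nbr V F x \<longleftrightarrow> y \<in> V \<and> y \<noteq> x \<and> {x,y} \<in> F" for F x y by (simp add: nbr_def)
  have fA: "y \<in> B" if "x \<in> A" "{x,y} \<in> E" for x y
  proof (rule ccontr)
    assume "y \<notin> B"
    then have "{x,y} \<in> Es" using that assms(4) by (auto simp: Es_def eb)
    then have "y \<in> nbr V Es x" using EV[OF that(2)] by (auto simp: nbrI)
    then show False using iso that by auto
  qed
  have fM: "nbr V Es x = nbr V E x - A" if "x \<notin> A" for x
  proof
    show "nbr V Es x \<subseteq> nbr V E x - A"
    proof
      fix y assume y: "y \<in> nbr V Es x"
      then have "{x,y} \<in> Es" "y \<in> V" "y \<noteq> x" by (auto simp: nbrI)
      moreover have "y \<notin> A"
      proof
        assume "y \<in> A"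
        then have "x \<in> nbr V Es y" using \<open>{x,y} \<in> Es\<close> EV EsE sym by (auto simp: nbrI)
        then show False using iso \<open>y \<in> A\<close> by auto
      qed
      ultimately show "y \<in> nbr V E x - A" using EsE by (auto simp: nbrI)
    qed
  next
    show "nbr V E x - A \<subseteq> nbr V Es x"
      using that by (auto simp: nbrI Es_def eb)
  qed
  have fMn: "nbr V Es x = nbr V E x" if "x \<notin> A" "x \<notin> B" for x
    using fM[OF that(1)] fA that(2) sym by (auto simp: nbrI)
  have noBB: "{x,y} \<notin> E" if "x \<in> B" "y \<in> B" for x y
    using eB that by (auto simp: edges_in_def)
  have Tcore: "core_prop V Es T" unfolding T_def by (rule S4_core[OF finV])
  have TV: "T \<subseteq> V" unfolding T_def by (rule S4_sub)
  have RS1: "insert x (nbr V Es x) \<subseteq> T \<and> deg V Es x \<ge> 5" if "x \<in> B \<union> nbrs V Es B" for x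
    using rs that by (auto simp: robust_sapphire_def T_def)
  have BT: "B \<subseteq> T" using RS1 by blast
  have TA: "a \<notin> T \<union> nbrs V Es T" if "a \<in> A" for a
  proof
    assume "a \<in> T \<union> nbrs V Es T"
    then have "card (nbr V Es a \<inter> T) \<ge> 4" using Tcore by (auto simp: core_prop_def)
    then show False using iso that by auto
  qed
  have uniqB: "b1 = b2" if "b1 \<in> B" "b2 \<in> B" "b1 \<in> nbr V Es x" "b2 \<in> nbr V Es x" for x b1 b2
  proof (rule ccontr)
    assume ne: "b1 \<noteq> b2"
    have "{b1, x} \<in> Es" "{x, b2} \<in> Es" using that sym by (auto simp: nbrI)
    then have "dist Es b1 b2 \<le> 2" by (rule dist_le2)
    moreover have "dist Es b1 b2 \<ge> 5" using rs that ne by (auto simp: robust_sapphire_def)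
    ultimately show False
      by (metis enat_ord_number(1) numeral_le_iff order.trans semiring_norm(68) semiring_norm(69) semiring_norm(72))
  qed
  have B'B: "B' \<subseteq> B" using fA by (auto simp: B'_def nbrs_def sym)
  have B'A': "b \<notin> B'" if "b \<in> B" "a \<in> A'" "{a,b} \<in> E" for a b
  proof
    assume "b \<in> B'"
    then obtain a2 where a2: "a2 \<in> A - A'" "{b,a2} \<in> E" by (auto simp: B'_def nbrs_def)
    have "{a, a2} \<subseteq> nbr V E b \<inter> A" using a2 that EV sym by (auto simp: nbrI A'_def)
    moreover have "a \<noteq> a2" using a2 that by auto
    ultimately have "card {a, a2} \<le> card (nbr V E b \<inter> A)"
      by (intro card_mono) (auto intro: fin_nbr[OF finV])
    then show False using b1 that \<open>a \<noteq> a2\<close> by fastforce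
  qed

  have finN: "finite (nbr V F x)" for F x by (rule fin_nbr[OF finV])
  have K: "card (nbr V E x \<inter> X) \<ge> 4" if x: "x \<notin> A" "x \<in> T \<union> nbrs V Es T" for x
  proof (cases "\<exists>b\<in>B'. b \<in> nbr V Es x")
    case False
    have "4 \<le> card (nbr V Es x \<inter> T)" using Tcore x by (auto simp: core_prop_def)
    also have "\<dots> \<le> card (nbr V E x \<inter> X)"
      by (rule card_mono) (use finN False fM[OF x(1)] in \<open>auto simp: X_def\<close>)
    finally show ?thesis .
  next
    case True
    then obtain b where b: "b \<in> B'" "b \<in> nbr V Es x" by blast
    have bB: "b \<in> B" using b B'B by auto
    have xB: "x \<notin> B" using noBB[OF _ bB, of x] b EsE by (auto simp: nbrI)
    have xb: "{x,b} \<in> Es" using b(2) by (simp add: nbrI)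
    then have "x \<in> V" using EV EsE by blast
    then have "x \<in> nbrs V Es B" using xb bB xB by (auto simp: nbrs_def)
    then have R: "nbr V Es x \<subseteq> T" "deg V Es x \<ge> 5" using RS1 by auto
    have "4 \<le> card (nbr V Es x) - 1" using R(2) by (simp add: deg_def)
    also have "\<dots> = card (nbr V Es x - {b})" using b(2) finN by (simp add: card_Diff_singleton)
    also have "\<dots> \<le> card (nbr V E x \<inter> X)"
    proof (rule card_mono)
      show "finite (nbr V E x \<inter> X)" using finN by auto
      show "nbr V Es x - {b} \<subseteq> nbr V E x \<inter> X"
      proof
        fix y assume y: "y \<in> nbr V Es x - {b}"
        then have "y \<notin> B" using uniqB[OF _ bB _ b(2), of y] by auto
        then show "y \<in> nbr V E x \<inter> X" using y R(1) B'B fM[OF x(1)] by (auto simp: X_def)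
      qed
    qed
    finally show ?thesis .
  qed
  have XV: "X \<subseteq> V" using TV assms(2) by (auto simp: X_def A'_def)
  have Xcore: "core_prop V E X"
    unfolding core_prop_def
  proof (intro conjI XV ballI)
    fix x assume x: "x \<in> X \<union> nbrs V E X"
    show "4 \<le> card (nbr V E x \<inter> X)"
    proof (cases "x \<in> A")
      case True
      have xA': "x \<in> A'"
      proof (rule ccontr)
        assume "x \<notin> A'"
        then have "x \<in> nbrs V E X" using x TA[OF True] by (auto simp: X_def)
        then obtain y where y: "y \<in> X" "{x,y} \<in> E" by (auto simp: nbrs_def)
        have yB: "y \<in> B" using fA True y by auto
        then have "y \<in> B'" using True \<open>x \<notin> A'\<close> y EV sym assms(4) by (auto simp: B'_def nbrs_def)
        then show False using y yB assms(4) by (auto simp: X_def A'_def)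
      qed
      have "nbr V E x \<subseteq> X"
      proof
        fix y assume "y \<in> nbr V E x"
        then have "{x,y} \<in> E" by (simp add: nbrI)
        then have "y \<in> B" "y \<notin> B'" using fA[OF True] B'A'[OF _ xA'] by auto
        then show "y \<in> X" using BT by (auto simp: X_def)
      qed
      then have "nbr V E x \<inter> X = nbr V E x" by auto
      then show ?thesis using xA' by (simp add: A'_def deg_def)
    next
      case False
      have "x \<in> T \<union> nbrs V Es T"
      proof (cases "x \<in> X")
        case True
        then show ?thesis using False by (auto simp: X_def A'_def)
      next
        case xX: False
        show ?thesis
        proof (rule ccontr)
          assume nT: "x \<notin> T \<union> nbrs V Es T"
          obtain y where y: "y \<in> X" "{x,y} \<in> E" "x \<in> V" using x xX by (auto simp: nbrs_def)
          have xB: "x \<notin> B" using nT BT by auto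
          have yA: "y \<notin> A"
          proof
            assume "y \<in> A" then have "x \<in> B" using fA y sym by metis
            then show False using xB by simp
          qed
          then have yT: "y \<in> T" using y by (auto simp: X_def A'_def)
          have "{x,y} \<in> Es" using y False yA by (auto simp: Es_def eb)
          then have "x \<in> nbrs V Es T" using yT nT y by (auto simp: nbrs_def)
          then show False using nT by simp
        qed
      qed
      then show ?thesis using K False by auto
    qed
  qed
  have XS: "X \<subseteq> S4 V E" by (rule S4_max[OF Xcore])
  define Y where "Y = S4 V E"
  have Ycore: "core_prop V E Y" unfolding Y_def by (rule S4_core[OF finV])
  have degY: "deg V E x \<ge> 4" if "x \<in> Y \<union> nbrs V E Y" for x
  proof -
    have "4 \<le> card (nbr V E x \<inter> Y)" using Ycore that by (auto simp: core_prop_def)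
    also have "\<dots> \<le> deg V E x" unfolding deg_def by (rule card_mono) (use finN in auto)
    finally show ?thesis .
  qed
  have YA: "Y \<inter> A \<subseteq> A'" using degY by (auto simp: A'_def)
  have YB': "Y \<inter> B' = {}"
  proof (rule ccontr)
    assume "Y \<inter> B' \<noteq> {}"
    then obtain b where b: "b \<in> Y" "b \<in> B'" by auto
    then obtain a where a: "a \<in> A - A'" "{b,a} \<in> E" by (auto simp: B'_def nbrs_def)
    have "a \<in> Y \<union> nbrs V E Y" using a b EV sym by (auto simp: nbrs_def)
    then have "deg V E a \<ge> 4" by (rule degY)
    then show False using a by (auto simp: A'_def)
  qed
  define Z where "Z = (Y - A) \<union> T"
  have Zcore: "core_prop V Es Z"
    unfolding core_prop_def
  proof (intro conjI ballI)
    show "Z \<subseteq> V" using TV Ycore by (auto simp: Z_def core_prop_def)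
    fix x assume x: "x \<in> Z \<union> nbrs V Es Z"
    show "4 \<le> card (nbr V Es x \<inter> Z)"
    proof (cases "x \<in> T \<union> nbrs V Es T")
      case True
      then have "4 \<le> card (nbr V Es x \<inter> T)" using Tcore by (auto simp: core_prop_def)
      also have "\<dots> \<le> card (nbr V Es x \<inter> Z)" by (rule card_mono) (use finN in \<open>auto simp: Z_def\<close>)
      finally show ?thesis .
    next
      case False
      then have xT: "x \<notin> T" by auto
      then have xB: "x \<notin> B" using BT by auto
      have "x \<in> Y - A \<or> (\<exists>y\<in>Y - A. {x,y} \<in> Es \<and> x \<in> V \<and> x \<notin> Z)"
      proof (cases "x \<in> Z")
        case True then show ?thesis using xT by (auto simp: Z_def)
      next
        case xZ: False
        then obtain y where y: "y \<in> Z" "{x,y} \<in> Es" "x \<in> V" using x by (auto simp: nbrs_def)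
        have "y \<notin> T" using False y xZ xT by (auto simp: nbrs_def)
        then show ?thesis using y xZ by (auto simp: Z_def)
      qed
      then have xAY: "x \<notin> A \<and> x \<in> Y \<union> nbrs V E Y"
      proof (elim disjE)
        assume "x \<in> Y - A" then show ?thesis by auto
      next
        assume "\<exists>y\<in>Y - A. {x,y} \<in> Es \<and> x \<in> V \<and> x \<notin> Z"
        then obtain y where y: "y \<in> Y - A" "{x,y} \<in> Es" "x \<in> V" "x \<notin> Z" by auto
        have "x \<notin> A"
        proof
          assume "x \<in> A"
          moreover have "y \<in> nbr V Es x" using y EsE EV by (auto simp: nbrI)
          ultimately show False using iso by auto
        qed
        moreover have "x \<in> Y \<union> nbrs V E Y" using y EsE by (auto simp: nbrs_def Z_def)
        ultimately show ?thesis by auto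
      qed
      then have xA: "x \<notin> A" and xY: "x \<in> Y \<union> nbrs V E Y" by auto
      have "4 \<le> card (nbr V E x \<inter> Y)" using Ycore xY by (auto simp: core_prop_def)
      also have "\<dots> \<le> card (nbr V Es x \<inter> Z)"
      proof (rule card_mono)
        show "finite (nbr V Es x \<inter> Z)" using finN by auto
        show "nbr V E x \<inter> Y \<subseteq> nbr V Es x \<inter> Z"
        proof
          fix y assume y: "y \<in> nbr V E x \<inter> Y"
          have "y \<notin> A" using y fA xB sym by (auto simp: nbrI)
          then show "y \<in> nbr V Es x \<inter> Z" using y fMn[OF xA xB] by (auto simp: Z_def)
        qed
      qed
      finally show ?thesis .
    qed
  qed
  have "Z \<subseteq> T" unfolding T_def by (rule S4_max[OF Zcore])
  then have "Y \<subseteq> X" using YA YB' by (auto simp: X_def Z_def)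
  then have SX: "S4 V E = X" using XS by (auto simp: Y_def)
  have PX: "nbrs V E X = nbrs V Es T \<union> B'"
  proof (intro equalityI subsetI)
    fix y assume y: "y \<in> nbrs V E X"
    then obtain z where z: "z \<in> X" "{y,z} \<in> E" "y \<in> V" "y \<notin> X" by (auto simp: nbrs_def)
    show "y \<in> nbrs V Es T \<union> B'"
    proof (rule ccontr)
      assume nn: "y \<notin> nbrs V Es T \<union> B'"
      have yT: "y \<notin> T" using z nn by (auto simp: X_def)
      have yA: "y \<notin> A"
      proof
        assume yA: "y \<in> A"
        then have "y \<in> A - A'" using z by (auto simp: X_def)
        moreover have zB: "z \<in> B" using fA[OF yA z(2)] .
        ultimately have "z \<in> B'" using z EV sym assms(4) by (auto simp: B'_def nbrs_def)
        then show False using z zB assms(4) by (auto simp: X_def A'_def)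
      qed
      have zA: "z \<notin> A"
      proof
        assume "z \<in> A" then have "y \<in> B" using fA z sym by metis
        then show False using yT BT by auto
      qed
      then have zT: "z \<in> T" using z by (auto simp: X_def A'_def)
      have "{y,z} \<in> Es" using z yA zA by (auto simp: Es_def eb)
      then have "y \<in> nbrs V Es T" using zT yT z by (auto simp: nbrs_def)
      then show False using nn by simp
    qed
  next
    fix y assume y: "y \<in> nbrs V Es T \<union> B'"
    show "y \<in> nbrs V E X"
    proof (cases "y \<in> B'")
      case True
      then have yB: "y \<in> B" using B'B by auto
      then have yX: "y \<notin> X" using True assms(4) by (auto simp: X_def A'_def)
      have "deg V Es y \<ge> 5" "nbr V Es y \<subseteq> T" using RS1 yB by auto
      then obtain z where z: "z \<in> nbr V Es y" by (metis deg_def card.empty ex_in_conv not_numeral_le_zero)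
      then have zE: "{y,z} \<in> E" "z \<in> T" using EsE \<open>nbr V Es y \<subseteq> T\<close> by (auto simp: nbrI)
      then have "z \<notin> B" using noBB yB by auto
      then have "z \<in> X" using zE B'B by (auto simp: X_def)
      then show ?thesis using zE yX EV by (auto simp: nbrs_def)
    next
      case False
      then have yN: "y \<in> nbrs V Es T" using y by auto
      then have yA: "y \<notin> A" using TA by auto
      have yX: "y \<notin> X" using yN yA by (auto simp: X_def nbrs_def A'_def)
      have "card (nbr V E y \<inter> X) \<ge> 4" using K yA yN by auto
      then obtain z where "z \<in> nbr V E y \<inter> X" by (metis card.empty ex_in_conv not_numeral_le_zero)
      moreover have "y \<in> V" using yN by (auto simp: nbrs_def)
      ultimately show ?thesis using yX by (auto simp: nbrs_def nbrI)
    qed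
  qed
  have PE: "P4 V E = P4 V Es \<union> B'" using SX PX by (simp add: P4_def T_def)
  have B'T: "B' \<subseteq> T" using B'B BT by auto
  have RE: "R4 V E = R4 V Es - A'"
    using SX PE B'T unfolding R4_def by (auto simp: X_def T_def)
  show ?thesis using SX PE RE unfolding Let_def Es_def[symmetric] A'_def[symmetric] B'_def[symmetric]
    by (simp add: X_def T_def)
qed

end
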